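(* Let $n\ge2$, $\boldsymbol{\pi}\in\Delta_n^\circ$, $\sigma>0$ and $\mathbf{x},\mathbf{y}\in\Delta_n^\circ$. Then $$H_{1+\sigma}\big(\mu_{\boldsymbol{\pi},\mathbf{y},\sigma}\,\big\|\,\mu_{\boldsymbol{\pi},\mathbf{x},\sigma}\big)=\frac1\sigma\,\Gamma_{\boldsymbol{\pi}}(\mathbf{y}\,\|\,\mathbf{x}).$$
   Context: $\Delta_n^\circ=\{\mathbf{x}\in(0,1]^n:\sum_ix_i=1\}$. For $\mathbf{x}\in(0,\infty)^n$, $\mathcal{C}[\mathbf{x}]=\mathbf{x}/\sum_jx_j$, $\mathbf{x}^{-1}=(1/x_i)_i$, $\odot$ is the componentwise product. For $\boldsymbol{\pi}\in\Delta_n^\circ$ and $\mathbf{x},\mathbf{y}\in(0,\infty)^n$, $\Gamma_{\boldsymbol{\pi}}(\mathbf{y}\,\|\,\mathbf{x})=\log\big(\sum_i\pi_i\frac{y_i}{x_i}\big)-\sum_i\pi_i\log\frac{y_i}{x_i}$. The scaled Dirichlet distribution $\mathcal{SD}(\boldsymbol{\alpha},\boldsymbol{\beta})$ ($\boldsymbol{\alpha},\boldsymbol{\beta}\in(0,\infty)^n$) is the law of $\mathcal{C}[\mathbf{X}]$ with $X_1,\dots,X_n$ independent, $X_i\sim\mathrm{Gamma}(\text{shape }\alpha_i,\text{ rate }\beta_i)$; and $\mu_{\boldsymbol{\pi},\mathbf{x},\sigma}=\mathcal{SD}\big(\tfrac1\sigma\boldsymbol{\pi},\ \boldsymbol{\pi}\odot\mathbf{x}^{-1}\big)$.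 For probability measures $\mu_1\ll\mu_2$ and $\alpha>0$, $\alpha\neq1$, the Rényi divergence is $H_\alpha(\mu_1\|\mu_2)=\frac{1}{\alpha-1}\log\int\big(\frac{d\mu_1}{d\mu_2}\big)^\alpha d\mu_2$ (and $+\infty$ if $\mu_1\not\ll\mu_2$). *)

theory Defs
  imports "HOL-Analysis.Analysis" "HOL-Probability.Probability"
begin

text \<open>Open simplex: vectors indexed by a finite type 'n (n = CARD('n)).\<close>
definition open_simplex :: "('n::finite \<Rightarrow> real) set" where
  "open_simplex = {x. (\<forall>i. 0 < x i \<and> x i \<le> 1) \<and> (\<Sum>i\<in>UNIV. x i) = 1}"

definition closure_op :: "('n::finite \<Rightarrow> real) \<Rightarrow> ('n \<Rightarrow> real)" where
  "closure_op x = (\<lambda>i. x i / (\<Sum>j\<in>UNIV. x j))"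

definition gamma_density :: "real \<Rightarrow> real \<Rightarrow> real \<Rightarrow> real" where
  "gamma_density a b t =
     (if 0 < t then b powr a * t powr (a - 1) * exp (- b * t) / Gamma a else 0)"

definition gamma_distr :: "real \<Rightarrow> real \<Rightarrow> real measure" where
  "gamma_distr a b = density lborel (\<lambda>t. ennreal (gamma_density a b t))"

definition scaled_dirichlet :: "('n::finite \<Rightarrow> real) \<Rightarrow> ('n \<Rightarrow> real) \<Rightarrow> ('n \<Rightarrow> real) measure" where
  "scaled_dirichlet \<alpha> \<beta> =
     distr (PiM UNIV (\<lambda>i. gamma_distr (\<alpha> i) (\<beta> i))) (PiM UNIV (\<lambda>_. borel)) closure_op"

definition mu_sd :: "('n::finite \<Rightarrow> real) \<Rightarrow> ('n \<Rightarrow> real) \<Rightarrow> real \<Rightarrow> ('n \<Rightarrow> real) measure" where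
  "mu_sd \<pi> x \<sigma> = scaled_dirichlet (\<lambda>i. \<pi> i / \<sigma>) (\<lambda>i. \<pi> i / x i)"

definition Gamma_div :: "('n::finite \<Rightarrow> real) \<Rightarrow> ('n \<Rightarrow> real) \<Rightarrow> ('n \<Rightarrow> real) \<Rightarrow> real" where
  "Gamma_div \<pi> y x = ln (\<Sum>i\<in>UNIV. \<pi> i * (y i / x i)) - (\<Sum>i\<in>UNIV. \<pi> i * ln (y i / x i))"

text \<open>RN_deriv M2 M1 is the Radon-Nikodym derivative dM1/dM2.\<close>
definition renyi_div :: "real \<Rightarrow> 'a measure \<Rightarrow> 'a measure \<Rightarrow> ereal" where
  "renyi_div \<alpha> M1 M2 =
     (let I = (\<integral>\<^sup>+ \<omega>. ennreal ((enn2real (RN_deriv M2 M1 \<omega>)) powr \<alpha>) \<partial>M2) in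
      if \<not> absolutely_continuous M2 M1 \<or> I = \<top> then \<infinity>
      else ereal (ln (enn2real I) / (\<alpha> - 1)))"

end

theory Submission
  imports Defs
begin


lemma sup_ind:
  fixes h :: "real \<Rightarrow> real" and S :: "nat \<Rightarrow> real set"
  assumes h: "0 \<le> h x" and S: "incseq S"
  shows "(SUP N. ennreal (h x * indicator (S N) x)) = ennreal (h x * indicator (\<Union>N. S N) x)"
proof (cases "x \<in> (\<Union>N. S N)")
  case True
  then obtain N0 where N0: "x \<in> S N0" by auto
  show ?thesis
  proof (rule antisym)
    show "(SUP N. ennreal (h x * indicator (S N) x)) \<le> ennreal (h x * indicator (\<Union>N. S N) x)"
      using True h by (intro SUP_least ennreal_leI) (auto simp: indicator_def)
    show "ennreal (h x * indicator (\<Union>N. S N) x) \<le> (SUP N. ennreal (h x * indicator (S N) x))"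
      using True N0 by (intro SUP_upper2[of N0]) (auto simp: indicator_def)
  qed
next
  case False
  then show ?thesis by (auto simp: indicator_def)
qed

lemma incseq_ind:
  fixes h :: "real \<Rightarrow> real" and S :: "nat \<Rightarrow> real set"
  assumes h: "\<And>x. 0 \<le> h x" and S: "incseq S"
  shows "incseq (\<lambda>N x. ennreal (h x * indicator (S N) x))"
  unfolding incseq_def
proof (intro allI impI le_funI ennreal_leI)
  fix m n :: nat and x assume "m \<le> n"
  then have "S m \<subseteq> S n" using S by (auto simp: incseq_def)
  then show "h x * indicator (S m) x \<le> h x * indicator (S n) x"
    using h[of x] by (auto simp: indicator_def)
qed

lemma gamma_nn:
  assumes a: "a > 0"
  shows "(\<integral>\<^sup>+ s. ennreal (s powr (a - 1) / exp s * indicator {0<..} s) \<partial>lborel) = ennreal (Gamma a)"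
proof -
  have "integral\<^sup>N lborel (\<lambda>x. indicator {0..} x * (x powr (a - 1) / exp x)) = Gamma a"
    by (rule nn_integral_has_integral_lebesgue[OF _ Gamma_integral_real[OF a]]) auto
  moreover have "(\<lambda>x. ennreal (indicator {0..} x * (x powr (a - 1) / exp x))) =
     (\<lambda>s. ennreal (s powr (a - 1) / exp s * indicator {0<..} s))"
    by (auto simp: indicator_def fun_eq_iff)
  ultimately show ?thesis by simp
qed

lemma m_gamma:
  assumes a: "a > 0"
  shows "(\<integral>\<^sup>+ v. ennreal (exp v powr a * exp (- exp v)) \<partial>lborel) = ennreal (Gamma a)"
proof -
  define f where "f = (\<lambda>s::real. s powr (a - 1) / exp s)"
  have f0: "0 \<le> f x" for x unfolding f_def by simp
  have fm[measurable]: "f \<in> borel_measurable borel" unfolding f_def by measurable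
  define S where "S = (\<lambda>N::nat. {exp (- real N)..exp (real N)})"
  define T where "T = (\<lambda>N::nat. {- real N..real N})"
  have incS: "incseq S" unfolding S_def incseq_def by auto
  have incT: "incseq T" unfolding T_def incseq_def by auto
  have US: "(\<Union>N. S N) = {0<..}"
  proof safe
    fix x N assume "x \<in> S N" then show "0 < x" unfolding S_def by (auto intro: less_le_trans[OF exp_gt_zero])
  next
    fix x :: real assume "0 < x"
    obtain N :: nat where N: "\<bar>ln x\<bar> \<le> real N" using real_arch_simple by blast
    have "exp (- real N) \<le> x" using N \<open>0<x\<close>
      by (metis abs_le_iff exp_le_cancel_iff exp_ln minus_le_iff)
    moreover have "x \<le> exp (real N)" using N \<open>0<x\<close>
      by (metis abs_le_iff exp_le_cancel_iff exp_ln)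
    ultimately show "x \<in> (\<Union>N. S N)" unfolding S_def by auto
  qed
  have UT: "(\<Union>N. T N) = UNIV"
  proof safe
    fix x :: real
    obtain N :: nat where N: "\<bar>x\<bar> \<le> real N" using real_arch_simple by blast
    then have "x \<in> T N" unfolding T_def by auto
    then show "x \<in> (\<Union>N. T N)" by blast
  qed auto
  have sub: "(\<integral>\<^sup>+x. f x * indicator (S N) x \<partial>lborel) =
             (\<integral>\<^sup>+x. f (exp x) * exp x * indicator (T N) x \<partial>lborel)" for N
    unfolding S_def T_def
    by (rule nn_integral_substitution[where g' = exp])
       (auto intro!: DERIV_exp continuous_on_exp continuous_on_id simp: set_borel_measurable_def)
  have "ennreal (Gamma a) = (\<integral>\<^sup>+ s. ennreal (f s * indicator (\<Union>N. S N) s) \<partial>lborel)"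
    using gamma_nn[OF a] by (simp add: US f_def)
  also have "\<dots> = (\<integral>\<^sup>+ s. (SUP N. ennreal (f s * indicator (S N) s)) \<partial>lborel)"
    by (simp add: sup_ind[where h=f, OF f0 incS])
  also have "\<dots> = (SUP N. \<integral>\<^sup>+ s. ennreal (f s * indicator (S N) s) \<partial>lborel)"
    by (rule nn_integral_monotone_convergence_SUP[OF incseq_ind[OF f0 incS]])
       (auto simp: S_def)
  also have "\<dots> = (SUP N. \<integral>\<^sup>+ s. ennreal ((f (exp s) * exp s) * indicator (T N) s) \<partial>lborel)"
    using sub by simp
  also have "\<dots> = (\<integral>\<^sup>+ s. (SUP N. ennreal ((f (exp s) * exp s) * indicator (T N) s)) \<partial>lborel)"
    by (rule nn_integral_monotone_convergence_SUP[symmetric, OF incseq_ind[OF _ incT]])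
       (auto simp: T_def f_def)
  also have "\<dots> = (\<integral>\<^sup>+ s. ennreal ((f (exp s) * exp s)) \<partial>lborel)"
    by (subst sup_ind[OF _ incT]) (auto simp: UT f_def)
  also have "\<dots> = (\<integral>\<^sup>+ v. ennreal (exp v powr a * exp (- exp v)) \<partial>lborel)"
  proof (intro nn_integral_cong arg_cong[where f=ennreal])
    fix v :: real
    have "exp v powr (a - 1) * exp v = exp v powr a"
      by (simp add: powr_diff)
    then show "f (exp v) * exp v = exp v powr a * exp (- exp v)"
      unfolding f_def by (simp add: exp_minus field_simps)
  qed
  finally show ?thesis ..
qed



abbreviation Ln :: "('n::finite \<Rightarrow> real) measure" where
  "Ln \<equiv> PiM UNIV (\<lambda>_. lborel)"

lemma lborel_scale_preimage:
  fixes c :: real assumes c: "c > 0" and A: "A \<in> sets borel"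
  shows "emeasure lborel ((\<lambda>x. c * x) -` A) = ennreal (inverse c) * emeasure lborel A"
proof -
  have "emeasure lborel ((\<lambda>x. c * x) -` A) = emeasure (distr lborel borel ((*) c)) A"
    using A by (subst emeasure_distr) auto
  also have "\<dots> = emeasure (density lborel (\<lambda>_. ennreal (inverse \<bar>c\<bar>))) A"
    using c by (subst lborel_distr_mult) auto
  also have "\<dots> = ennreal (inverse c) * emeasure lborel A"
    using A c by (subst emeasure_density_const) auto
  finally show ?thesis .
qed

lemma scale_meas[measurable]:
  "(\<lambda>u::'n::finite\<Rightarrow>real. \<lambda>i. c * u i) \<in> measurable (PiM UNIV (\<lambda>_. lborel)) (PiM UNIV (\<lambda>_. lborel))"
  by (rule measurable_PiM_single') (auto simp: space_PiM)

lemma scale_Ln: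
  fixes c :: real and h :: "('n::finite \<Rightarrow> real) \<Rightarrow> ennreal"
  assumes c: "c > 0" and h[measurable]: "h \<in> borel_measurable Ln"
  shows "(\<integral>\<^sup>+t. h t \<partial>Ln) = ennreal (c ^ CARD('n)) * (\<integral>\<^sup>+u. h (\<lambda>i. c * u i) \<partial>(Ln::('n \<Rightarrow> real) measure))"
proof -
  interpret product_sigma_finite "\<lambda>_::'n. lborel :: real measure" by standard
  have scs: "(\<lambda>x::real. c * x) -` B \<in> sets borel" if "B \<in> sets borel" for B
    using measurable_sets[of "\<lambda>x::real. c*x" borel borel B] that by simp
  define P where "P = density (distr Ln Ln (\<lambda>u::'n\<Rightarrow>real. \<lambda>i. c * u i)) (\<lambda>_. ennreal (c ^ CARD('n)))"
  have "P = Ln"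
  proof (rule PiM_eqI)
    show "sets P = sets Ln" unfolding P_def by simp
    fix A :: "'n \<Rightarrow> real set" assume A: "\<And>i. i \<in> UNIV \<Longrightarrow> A i \<in> sets lborel"
    have pre: "(\<lambda>u::'n\<Rightarrow>real. \<lambda>i. c * u i) -` Pi\<^sub>E UNIV A \<inter> space Ln = Pi\<^sub>E UNIV (\<lambda>i. (\<lambda>x. c * x) -` A i)"
      by (auto simp: space_PiM PiE_def Pi_def extensional_def)
    have Ai: "(\<lambda>x. c * x) -` A i \<in> sets borel" for i using A scs by simp
    have "P (Pi\<^sub>E UNIV A) = ennreal (c ^ CARD('n)) * emeasure Ln (Pi\<^sub>E UNIV (\<lambda>i. (\<lambda>x. c * x) -` A i))"
    proof -
      have PE: "Pi\<^sub>E UNIV A \<in> sets Ln" using A by (auto intro!: sets_PiM_I_finite)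
      have "emeasure (distr Ln Ln (\<lambda>u::'n\<Rightarrow>real. \<lambda>i. c * u i)) (Pi\<^sub>E UNIV A) = emeasure Ln (Pi\<^sub>E UNIV (\<lambda>i. (\<lambda>x. c * x) -` A i))"
        using PE by (subst emeasure_distr) (auto simp: pre Ai)
      then show ?thesis unfolding P_def using PE by (subst emeasure_density_const) auto
    qed
    also have "\<dots> = ennreal (c ^ CARD('n)) * (\<Prod>i\<in>UNIV. ennreal (inverse c) * emeasure lborel (A i))"
      using A c by (subst emeasure_PiM) (auto simp: lborel_scale_preimage Ai)
    also have "\<dots> = ennreal (c ^ CARD('n)) * (ennreal (inverse c) ^ CARD('n) * (\<Prod>i\<in>UNIV. emeasure lborel (A i)))"
      by (simp add: prod.distrib card_UNIV_def)
    also have "\<dots> = (\<Prod>i\<in>UNIV. emeasure lborel (A i))"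
    proof -
      have e1: "ennreal c * ennreal (inverse c) = 1"
        using c by (simp add: ennreal_mult[symmetric])
      have "ennreal (c ^ CARD('n)) * ennreal (inverse c) ^ CARD('n) = (ennreal c * ennreal (inverse c)) ^ CARD('n)"
        using c by (simp add: ennreal_power power_mult_distrib)
      also have "\<dots> = 1" using e1 by simp
      finally show ?thesis by (simp add: mult.assoc[symmetric])
    qed
    finally show "P (Pi\<^sub>E UNIV A) = (\<Prod>i\<in>UNIV. emeasure lborel (A i))" .
  qed simp
  then have "(\<integral>\<^sup>+t. h t \<partial>Ln) = (\<integral>\<^sup>+t. h t \<partial>P)" by simp
  also have "\<dots> = ennreal (c ^ CARD('n)) * (\<integral>\<^sup>+u. h (\<lambda>i. c * u i) \<partial>(Ln::('n \<Rightarrow> real) measure))"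
    unfolding P_def
    by (subst nn_integral_density) (auto simp: nn_integral_cmult nn_integral_distr)
  finally show ?thesis .
qed

lemma shift_m:
  fixes g :: "real \<Rightarrow> ennreal" assumes g[measurable]: "g \<in> borel_measurable borel" and s: "s > 0"
  shows "(\<integral>\<^sup>+v. g (exp v * s) \<partial>lborel) = (\<integral>\<^sup>+v. g (exp v) \<partial>lborel)"
    and "(\<integral>\<^sup>+v. g (exp (- v) * s) \<partial>lborel) = (\<integral>\<^sup>+v. g (exp v) \<partial>lborel)"
proof -
  have "(\<integral>\<^sup>+v. g (exp v) \<partial>lborel) = (\<integral>\<^sup>+v. g (exp (ln s + 1 * v)) \<partial>lborel)"
    using nn_integral_real_affine[of "\<lambda>v. g (exp v)" 1 "ln s"] by simp
  also have "\<dots> = (\<integral>\<^sup>+v. g (exp v * s) \<partial>lborel)"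
    using s by (simp add: exp_add mult.commute)
  finally show "(\<integral>\<^sup>+v. g (exp v * s) \<partial>lborel) = (\<integral>\<^sup>+v. g (exp v) \<partial>lborel)" ..
  have "(\<integral>\<^sup>+v. g (exp v) \<partial>lborel) = (\<integral>\<^sup>+v. g (exp (ln s + (-1) * v)) \<partial>lborel)"
    using nn_integral_real_affine[of "\<lambda>v. g (exp v)" "-1" "ln s"] by simp
  also have "\<dots> = (\<integral>\<^sup>+v. g (exp (- v) * s) \<partial>lborel)"
    using s by (simp add: exp_diff exp_minus divide_inverse mult.commute)
  finally show "(\<integral>\<^sup>+v. g (exp (- v) * s) \<partial>lborel) = (\<integral>\<^sup>+v. g (exp v) \<partial>lborel)" ..
qed

lemma homog:
  fixes F :: "('n::finite \<Rightarrow> real) \<Rightarrow> ennreal" and L1 L2 :: "('n \<Rightarrow> real) \<Rightarrow> real"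
    and g1 g2 :: "real \<Rightarrow> ennreal"
  assumes [measurable]: "F \<in> borel_measurable Ln" "L1 \<in> borel_measurable Ln" "L2 \<in> borel_measurable Ln"
    "g1 \<in> borel_measurable borel" "g2 \<in> borel_measurable borel"
  assumes hom: "\<And>c t. c > 0 \<Longrightarrow> F t = ennreal (c ^ CARD('n)) * F (\<lambda>i. c * t i)"
    and L1h: "\<And>c t. c > 0 \<Longrightarrow> L1 (\<lambda>i. c * t i) = c * L1 t"
    and L2h: "\<And>c t. c > 0 \<Longrightarrow> L2 (\<lambda>i. c * t i) = c * L2 t"
    and pos: "\<And>t. F t \<noteq> 0 \<Longrightarrow> L1 t > 0 \<and> L2 t > 0"
  shows "(\<integral>\<^sup>+t. F t * g1 (L1 t) \<partial>Ln) * (\<integral>\<^sup>+v. g2 (exp v) \<partial>lborel)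
       = (\<integral>\<^sup>+t. F t * g2 (L2 t) \<partial>Ln) * (\<integral>\<^sup>+v. g1 (exp v) \<partial>lborel)"
proof -
  interpret Lnsf: product_sigma_finite "\<lambda>_::'n. lborel :: real measure" by standard
  interpret pair_sigma_finite "Ln :: ('n \<Rightarrow> real) measure" lborel
    by (intro pair_sigma_finite.intro Lnsf.sigma_finite lborel.sigma_finite_measure_axioms) simp
  have "(\<integral>\<^sup>+t. F t * g1 (L1 t) \<partial>Ln) * (\<integral>\<^sup>+v. g2 (exp v) \<partial>lborel)
      = (\<integral>\<^sup>+t. F t * g1 (L1 t) * (\<integral>\<^sup>+v. g2 (exp v) \<partial>lborel) \<partial>Ln)"
    by (rule nn_integral_multc[symmetric]) measurable
  also have "\<dots> = (\<integral>\<^sup>+t. (\<integral>\<^sup>+v. F t * g1 (L1 t) * g2 (exp v * L2 t) \<partial>lborel) \<partial>Ln)"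
  proof (rule nn_integral_cong)
    fix t :: "'n \<Rightarrow> real"
    show "F t * g1 (L1 t) * (\<integral>\<^sup>+v. g2 (exp v) \<partial>lborel) = (\<integral>\<^sup>+v. F t * g1 (L1 t) * g2 (exp v * L2 t) \<partial>lborel)"
    proof (cases "F t = 0")
      case False
      then have "L2 t > 0" using pos by auto
      then show ?thesis by (simp add: nn_integral_cmult shift_m)
    qed simp
  qed
  also have "\<dots> = (\<integral>\<^sup>+v. (\<integral>\<^sup>+t. F t * g1 (L1 t) * g2 (exp v * L2 t) \<partial>Ln) \<partial>lborel)"
    by (rule Fubini'[symmetric]) measurable
  also have "\<dots> = (\<integral>\<^sup>+v. (\<integral>\<^sup>+u. F u * g1 (exp (- v) * L1 u) * g2 (L2 u) \<partial>Ln) \<partial>lborel)"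
  proof (rule nn_integral_cong)
    fix v :: real
    have "(\<integral>\<^sup>+t. F t * g1 (L1 t) * g2 (exp v * L2 t) \<partial>Ln) =
      ennreal (exp (- v) ^ CARD('n)) * (\<integral>\<^sup>+u. F (\<lambda>i. exp (- v) * u i) * g1 (L1 (\<lambda>i. exp (- v) * u i))
          * g2 (exp v * L2 (\<lambda>i. exp (- v) * u i)) \<partial>(Ln::('n \<Rightarrow> real) measure))"
      by (rule scale_Ln) auto
    also have "\<dots> = (\<integral>\<^sup>+u. ennreal (exp (- v) ^ CARD('n)) * F (\<lambda>i. exp (- v) * u i) * g1 (exp (- v) * L1 u)
          * g2 (L2 u) \<partial>(Ln::('n \<Rightarrow> real) measure))"
    proof -
      have e: "\<And>x. exp v * (exp (-v) * x) = x" by (simp add: exp_minus)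
      show ?thesis by (subst nn_integral_cmult[symmetric]) (auto simp: L1h L2h mult.assoc e)
    qed
    also have "\<dots> = (\<integral>\<^sup>+u. F u * g1 (exp (- v) * L1 u) * g2 (L2 u) \<partial>Ln)"
      by (simp add: hom[symmetric])
    finally show "(\<integral>\<^sup>+t. F t * g1 (L1 t) * g2 (exp v * L2 t) \<partial>(Ln::('n \<Rightarrow> real) measure)) = 
       (\<integral>\<^sup>+u. F u * g1 (exp (- v) * L1 u) * g2 (L2 u) \<partial>Ln)" .
  qed
  also have "\<dots> = (\<integral>\<^sup>+u. (\<integral>\<^sup>+v. F u * g1 (exp (- v) * L1 u) * g2 (L2 u) \<partial>lborel) \<partial>Ln)"
    by (rule Fubini') measurable
  also have "\<dots> = (\<integral>\<^sup>+u. F u * g2 (L2 u) * (\<integral>\<^sup>+v. g1 (exp v) \<partial>lborel) \<partial>Ln)"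
  proof (rule nn_integral_cong)
    fix u :: "'n \<Rightarrow> real"
    show "(\<integral>\<^sup>+v. F u * g1 (exp (- v) * L1 u) * g2 (L2 u) \<partial>lborel) = F u * g2 (L2 u) * (\<integral>\<^sup>+v. g1 (exp v) \<partial>lborel)"
    proof (cases "F u = 0")
      case False
      then have "L1 u > 0" using pos by auto
      then have "(\<integral>\<^sup>+v. g1 (exp (- v) * L1 u) \<partial>lborel) = (\<integral>\<^sup>+v. g1 (exp v) \<partial>lborel)"
        by (intro shift_m(2)) auto
      then show ?thesis
        by (simp add: nn_integral_cmult nn_integral_multc mult.assoc[symmetric]) (simp add: mult_ac)
    qed simp
  qed
  also have "\<dots> = (\<integral>\<^sup>+t. F t * g2 (L2 t) \<partial>Ln) * (\<integral>\<^sup>+v. g1 (exp v) \<partial>lborel)"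
    by (rule nn_integral_multc) measurable
  finally show ?thesis .
qed



definition Qf :: "('n::finite \<Rightarrow> real) \<Rightarrow> ('n \<Rightarrow> real) \<Rightarrow> real" where
  "Qf a t = (\<Prod>i\<in>UNIV. if 0 < t i then t i powr (a i - 1) else 0)"

definition Lf :: "('n::finite \<Rightarrow> real) \<Rightarrow> ('n \<Rightarrow> real) \<Rightarrow> real" where
  "Lf b t = (\<Sum>i\<in>UNIV. b i * t i)"

definition Kc :: "('n::finite \<Rightarrow> real) \<Rightarrow> ('n \<Rightarrow> real) \<Rightarrow> real" where
  "Kc a b = (\<Prod>i\<in>UNIV. b i powr a i / Gamma (a i))"

definition gA :: "real \<Rightarrow> real \<Rightarrow> ennreal" where
  "gA p s = ennreal (s powr p * exp (- s))"

lemma Qf_meas[measurable]: "Qf a \<in> borel_measurable (PiM UNIV (\<lambda>_::'n::finite. lborel))"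
  unfolding Qf_def by measurable

lemma Lf_meas[measurable]: "Lf b \<in> borel_measurable (PiM UNIV (\<lambda>_::'n::finite. lborel))"
  unfolding Lf_def by measurable

lemma gA_meas[measurable]: "gA p \<in> borel_measurable borel"
  unfolding gA_def by measurable

lemma Qf_nonneg: "0 \<le> Qf a t"
  unfolding Qf_def by (intro prod_nonneg) auto

lemma Qf_nz: "Qf a t \<noteq> 0 \<Longrightarrow> 0 < t i"
  unfolding Qf_def by (cases "0 < t i") (auto simp: prod_zero_iff dest: spec[of _ i])

lemma Qf_pos: "(\<And>i. 0 < t i) \<Longrightarrow> 0 < Qf a t"
  unfolding Qf_def by (intro prod_pos) (auto simp: less_imp_neq[symmetric])

lemma Lf_pos: "(\<And>i. 0 < b i) \<Longrightarrow> (\<And>i. 0 < t i) \<Longrightarrow> 0 < Lf b t"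
  unfolding Lf_def by (intro sum_pos) auto

lemma Lf_hom: "Lf b (\<lambda>i. c * t i) = c * Lf b t"
  unfolding Lf_def by (simp add: sum_distrib_left mult_ac)

lemma Qf_hom:
  assumes c: "c > 0"
  shows "Qf a (\<lambda>i. c * t i) = c powr ((\<Sum>i\<in>UNIV. a i) - real CARD('n::finite)) * Qf a (t::'n \<Rightarrow> real)"
proof -
  have "Qf a (\<lambda>i. c * t i) = (\<Prod>i\<in>UNIV. c powr (a i - 1) * (if 0 < t i then t i powr (a i - 1) else 0))"
    unfolding Qf_def using c by (intro prod.cong refl) (auto simp: powr_mult zero_less_mult_iff)
  also have "\<dots> = (\<Prod>i\<in>UNIV. c powr (a i - 1)) * Qf a t"
    unfolding Qf_def by (simp add: prod.distrib)
  also have "(\<Prod>i\<in>UNIV. c powr (a i - 1)) = c powr (\<Sum>i\<in>UNIV. (a i - 1))"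
    using c by (simp add: powr_sum)
  also have "(\<Sum>i\<in>UNIV. (a i - 1)) = (\<Sum>i\<in>UNIV. a i) - real CARD('n)"
    by (simp add: sum_subtractf)
  finally show ?thesis .
qed

lemma gd_int:
  assumes a: "a > 0" and b: "b > 0"
  shows "(\<integral>\<^sup>+ t. ennreal (gamma_density a b t) \<partial>lborel) = 1"
proof -
  have "(\<integral>\<^sup>+ t. ennreal (gamma_density a b t) \<partial>lborel)
     = ennreal \<bar>1/b\<bar> * (\<integral>\<^sup>+ s. ennreal (gamma_density a b (0 + (1/b) * s)) \<partial>lborel)"
    using b by (intro nn_integral_real_affine) (auto simp: gamma_density_def)
  also have "(\<lambda>s. ennreal (gamma_density a b (0 + (1/b) * s))) =
      (\<lambda>s. ennreal (b / Gamma a) * ennreal (s powr (a - 1) / exp s * indicator {0<..} s))"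
  proof
    fix s :: real
    show "ennreal (gamma_density a b (0 + (1/b) * s)) = ennreal (b / Gamma a) * ennreal (s powr (a - 1) / exp s * indicator {0<..} s)"
    proof (cases "s > 0")
      case True
      have "b powr a * (s / b) powr (a - 1) = b * s powr (a - 1)"
        using True b by (simp add: powr_divide powr_diff field_simps)
      then have "gamma_density a b (0 + (1/b) * s) = (b / Gamma a) * (s powr (a - 1) / exp s)"
        using True b by (simp add: gamma_density_def exp_minus field_simps)
      then show ?thesis using True b a by (simp add: ennreal_mult[symmetric] Gamma_real_pos less_imp_le)
    next
      case False then show ?thesis using b by (auto simp: gamma_density_def zero_less_divide_iff)
    qed
  qed
  also have "(\<integral>\<^sup>+ s. ennreal (b / Gamma a) * ennreal (s powr (a - 1) / exp s * indicator {0<..} s) \<partial>lborel)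
      = ennreal (b / Gamma a) * ennreal (Gamma a)"
    using gamma_nn[OF a] by (subst nn_integral_cmult) auto
  also have "ennreal \<bar>1/b\<bar> * (ennreal (b / Gamma a) * ennreal (Gamma a)) = 1"
    using a b Gamma_real_pos[OF a]
    by (simp add: ennreal_mult[symmetric] less_imp_le less_imp_neq[symmetric])
  finally show ?thesis .
qed

lemma gamma_density_nonneg: "a > 0 \<Longrightarrow> b > 0 \<Longrightarrow> 0 \<le> gamma_density a b t"
  unfolding gamma_density_def by (auto intro!: divide_nonneg_pos Gamma_real_pos)

lemma gamma_density_meas[measurable]: "(\<lambda>t. gamma_density a b t) \<in> borel_measurable borel"
  unfolding gamma_density_def by measurable

lemma prob_gamma:
  assumes a: "a > 0" and b: "b > 0"
  shows "prob_space (gamma_distr a b)"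
  unfolding gamma_distr_def
  by (rule prob_spaceI) (simp add: emeasure_density gd_int[OF a b])



lemma gd_prod:
  fixes a b t :: "'n::finite \<Rightarrow> real"
  assumes a: "\<And>i. 0 < a i" and b: "\<And>i. 0 < b i"
  shows "(\<Prod>i\<in>UNIV. gamma_density (a i) (b i) (t i)) = Kc a b * Qf a t * exp (- Lf b t)"
proof (cases "\<forall>i. 0 < t i")
  case True
  have "(\<Prod>i\<in>UNIV. gamma_density (a i) (b i) (t i)) =
        (\<Prod>i\<in>UNIV. (b i powr a i / Gamma (a i)) * (if 0 < t i then t i powr (a i - 1) else 0) * exp (- (b i * t i)))"
    using True by (intro prod.cong refl) (simp add: gamma_density_def field_simps)
  also have "\<dots> = Kc a b * Qf a t * (\<Prod>i\<in>UNIV. exp (- (b i * t i)))"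
    unfolding Kc_def Qf_def prod.distrib[symmetric] ..
  also have "(\<Prod>i\<in>UNIV. exp (- (b i * t i))) = exp (- Lf b t)"
    by (simp add: Lf_def exp_sum[symmetric] sum_negf)
  finally show ?thesis .
next
  case False
  then obtain j where j: "\<not> 0 < t j" by auto
  then have "Qf a t = 0" using Qf_nz by blast
  moreover have "(\<Prod>i\<in>UNIV. gamma_density (a i) (b i) (t i)) = 0"
    using j by (auto simp: gamma_density_def prod_zero_iff intro!: exI[of _ j])
  ultimately show ?thesis by simp
qed

lemma PiM_gamma:
  fixes a b :: "'n::finite \<Rightarrow> real"
  assumes a: "\<And>i. 0 < a i" and b: "\<And>i. 0 < b i"
  shows "PiM UNIV (\<lambda>i. gamma_distr (a i) (b i)) =
         density (PiM UNIV (\<lambda>_. lborel)) (\<lambda>t. ennreal (\<Prod>i\<in>UNIV. gamma_density (a i) (b i) (t i)))"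
proof -
  interpret G: product_prob_space "\<lambda>i. gamma_distr (a i) (b i)"
    by (intro product_prob_spaceI prob_gamma a b)
  interpret Lp: product_sigma_finite "\<lambda>_::'n. lborel :: real measure" by standard
  have sg: "sets (gamma_distr (a i) (b i)) = sets borel" for i by (simp add: gamma_distr_def)
  show ?thesis
  proof (rule G.PiM_eqI[symmetric])
    show "sets (density (PiM UNIV (\<lambda>_. lborel)) (\<lambda>t. ennreal (\<Prod>i\<in>UNIV. gamma_density (a i) (b i) (t i))))
          = sets (PiM UNIV (\<lambda>i. gamma_distr (a i) (b i)))"
      by (simp add: sg cong: sets_PiM_cong)
    fix A :: "'n \<Rightarrow> real set" assume A: "\<And>i. i \<in> UNIV \<Longrightarrow> A i \<in> sets (gamma_distr (a i) (b i))"
    then have A': "A i \<in> sets borel" for i using sg by auto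
    have PE: "Pi\<^sub>E UNIV A \<in> sets (PiM UNIV (\<lambda>_. lborel :: real measure))"
      using A' by (auto intro!: sets_PiM_I_finite)
    have ind: "indicator (Pi\<^sub>E UNIV A) t = (\<Prod>i\<in>UNIV. indicator (A i) (t i) :: ennreal)" for t :: "'n \<Rightarrow> real"
      by (auto simp: indicator_def PiE_def Pi_def prod_zero_iff)
    have "emeasure (density (PiM UNIV (\<lambda>_. lborel)) (\<lambda>t. ennreal (\<Prod>i\<in>UNIV. gamma_density (a i) (b i) (t i)))) (Pi\<^sub>E UNIV A)
      = (\<integral>\<^sup>+t. ennreal (\<Prod>i\<in>UNIV. gamma_density (a i) (b i) (t i)) * indicator (Pi\<^sub>E UNIV A) t \<partial>PiM UNIV (\<lambda>_. lborel))"
      using PE by (subst emeasure_density) auto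
    also have "\<dots> = (\<integral>\<^sup>+t. (\<Prod>i\<in>UNIV. ennreal (gamma_density (a i) (b i) (t i)) * indicator (A i) (t i)) \<partial>PiM UNIV (\<lambda>_. lborel))"
      using a b by (intro nn_integral_cong) (simp add: ind prod.distrib prod_ennreal[symmetric] gamma_density_nonneg)
    also have "\<dots> = (\<Prod>i\<in>UNIV. (\<integral>\<^sup>+s. ennreal (gamma_density (a i) (b i) s) * indicator (A i) s \<partial>lborel))"
      using A' by (subst Lp.product_nn_integral_prod) auto
    also have "\<dots> = (\<Prod>i\<in>UNIV. emeasure (gamma_distr (a i) (b i)) (A i))"
      using A' by (intro prod.cong refl) (simp add: gamma_distr_def emeasure_density)
    finally show "emeasure (density (PiM UNIV (\<lambda>_. lborel)) (\<lambda>t. ennreal (\<Prod>i\<in>UNIV. gamma_density (a i) (b i) (t i)))) (Pi\<^sub>E UNIV A)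
      = (\<Prod>i\<in>UNIV. emeasure (gamma_distr (a i) (b i)) (A i))" .
  qed simp
qed

lemma int_prod_gd:
  fixes a b :: "'n::finite \<Rightarrow> real"
  assumes a: "\<And>i. 0 < a i" and b: "\<And>i. 0 < b i"
  shows "(\<integral>\<^sup>+t. ennreal (\<Prod>i\<in>UNIV. gamma_density (a i) (b i) (t i)) \<partial>PiM UNIV (\<lambda>_. lborel)) = 1"
proof -
  interpret Lp: product_sigma_finite "\<lambda>_::'n. lborel :: real measure" by standard
  have "(\<integral>\<^sup>+t. ennreal (\<Prod>i\<in>UNIV. gamma_density (a i) (b i) (t i)) \<partial>PiM UNIV (\<lambda>_. lborel))
     = (\<integral>\<^sup>+t. (\<Prod>i\<in>UNIV. ennreal (gamma_density (a i) (b i) (t i))) \<partial>PiM UNIV (\<lambda>_. lborel))"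
    using a b by (intro nn_integral_cong) (simp add: prod_ennreal[symmetric] gamma_density_nonneg)
  also have "\<dots> = (\<Prod>i\<in>UNIV. (\<integral>\<^sup>+s. ennreal (gamma_density (a i) (b i) s) \<partial>lborel))"
    by (subst Lp.product_nn_integral_prod) auto
  also have "\<dots> = 1" using a b by (simp add: gd_int)
  finally show ?thesis .
qed



lemma cancel_right: "b * ennreal c = d * ennreal c \<Longrightarrow> 0 < c \<Longrightarrow> b = d"
  by (metis ennreal_mult_cancel_left ennreal_eq_0_iff ennreal_neq_top linorder_not_le mult.commute)

lemma G_hom:
  fixes a b1 b2 t :: "'n::finite \<Rightarrow> real"
  assumes b1: "\<And>i. 0 < b1 i" and b2: "\<And>i. 0 < b2 i" and pq: "p + q = - (\<Sum>i\<in>UNIV. a i)"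
    and c: "c > 0"
  shows "c ^ CARD('n) * (Qf a (\<lambda>i. c * t i) * Lf b1 (\<lambda>i. c * t i) powr p * Lf b2 (\<lambda>i. c * t i) powr q)
       = Qf a t * Lf b1 t powr p * Lf b2 t powr q"
proof (cases "Qf a t = 0")
  case True then show ?thesis using c by (simp add: Qf_hom)
next
  case False
  then have tp: "0 < t i" for i using Qf_nz by blast
  have L1: "0 < Lf b1 t" and L2: "0 < Lf b2 t" using Lf_pos b1 b2 tp by blast+
  have "c ^ CARD('n) * (Qf a (\<lambda>i. c * t i) * Lf b1 (\<lambda>i. c * t i) powr p * Lf b2 (\<lambda>i. c * t i) powr q)
     = (c powr real CARD('n) * c powr ((\<Sum>i\<in>UNIV. a i) - real CARD('n)) * c powr p * c powr q)
        * (Qf a t * Lf b1 t powr p * Lf b2 t powr q)"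
    using c L1 L2 by (simp add: Qf_hom Lf_hom powr_mult powr_realpow)
  also have "c powr real CARD('n) * c powr ((\<Sum>i\<in>UNIV. a i) - real CARD('n)) * c powr p * c powr q = 1"
  proof -
    have "sum a UNIV + p + q = 0" using pq by simp
    then show ?thesis using c by (simp add: powr_add[symmetric])
  qed
  finally show ?thesis by simp
qed

lemma homG:
  fixes a b1 b2 c1 c2 :: "'n::finite \<Rightarrow> real" and \<phi> :: "('n \<Rightarrow> real) \<Rightarrow> ennreal"
  assumes b1: "\<And>i. 0 < b1 i" and b2: "\<And>i. 0 < b2 i" and pq: "p + q = - (\<Sum>i\<in>UNIV. a i)"
    and c1: "\<And>i. 0 < c1 i" and c2: "\<And>i. 0 < c2 i"
    and [measurable]: "\<phi> \<in> borel_measurable (PiM UNIV (\<lambda>_. lborel))"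
      "g1 \<in> borel_measurable borel" "g2 \<in> borel_measurable borel"
    and \<phi>h: "\<And>c t. c > 0 \<Longrightarrow> \<phi> (\<lambda>i. c * t i) = \<phi> t"
  shows "(\<integral>\<^sup>+t. (\<phi> t * ennreal (Qf a t * Lf b1 t powr p * Lf b2 t powr q)) * g1 (Lf c1 t) \<partial>PiM UNIV (\<lambda>_. lborel))
           * (\<integral>\<^sup>+v. g2 (exp v) \<partial>lborel)
       = (\<integral>\<^sup>+t. (\<phi> t * ennreal (Qf a t * Lf b1 t powr p * Lf b2 t powr q)) * g2 (Lf c2 t) \<partial>PiM UNIV (\<lambda>_. lborel))
           * (\<integral>\<^sup>+v. g1 (exp v) \<partial>lborel)"
proof (rule homog)
  show "(\<lambda>t. \<phi> t * ennreal (Qf a t * Lf b1 t powr p * Lf b2 t powr q)) \<in> borel_measurable (PiM UNIV (\<lambda>_. lborel))"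
    by measurable
  fix c :: real and t :: "'n \<Rightarrow> real" assume c: "c > 0"
  show "\<phi> t * ennreal (Qf a t * Lf b1 t powr p * Lf b2 t powr q) =
    ennreal (c ^ CARD('n)) * (\<phi> (\<lambda>i. c * t i) * ennreal (Qf a (\<lambda>i. c * t i) * Lf b1 (\<lambda>i. c * t i) powr p * Lf b2 (\<lambda>i. c * t i) powr q))"
    using G_hom[OF b1 b2 pq c, of t] c
    by (simp add: \<phi>h ennreal_mult[symmetric] Qf_nonneg mult_ac)
next
  fix t :: "'n \<Rightarrow> real"
  assume "\<phi> t * ennreal (Qf a t * Lf b1 t powr p * Lf b2 t powr q) \<noteq> 0"
  then have "Qf a t \<noteq> 0" by auto
  then have "0 < t i" for i using Qf_nz by blast
  then show "0 < Lf c1 t \<and> 0 < Lf c2 t" using Lf_pos c1 c2 by blast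
qed (auto simp: Lf_hom)



lemma Kc_pos: "(\<And>i. 0 < a i) \<Longrightarrow> (\<And>i. 0 < b i) \<Longrightarrow> 0 < Kc a b"
  unfolding Kc_def by (intro prod_pos divide_pos_pos Gamma_real_pos) (auto; metis less_irrefl)

lemma m_gA: "p > 0 \<Longrightarrow> (\<integral>\<^sup>+v. gA p (exp v) \<partial>lborel) = ennreal (Gamma p)"
  unfolding gA_def by (rule m_gamma)

lemma ennr3: "0 \<le> k \<Longrightarrow> 0 \<le> x \<Longrightarrow> 0 \<le> y \<Longrightarrow>
  ennreal (k * x * y) * f = ennreal k * (f * ennreal x * ennreal y)"
  by (simp add: ennreal_mult mult_ac)

lemma EXCH:
  fixes a bx bz :: "'n::finite \<Rightarrow> real" and \<phi> :: "('n \<Rightarrow> real) \<Rightarrow> ennreal"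
  assumes a: "\<And>i. 0 < a i" and bx: "\<And>i. 0 < bx i" and bz: "\<And>i. 0 < bz i"
    and [measurable]: "\<phi> \<in> borel_measurable (PiM UNIV (\<lambda>_. lborel))"
    and \<phi>h: "\<And>c t. c > 0 \<Longrightarrow> \<phi> (\<lambda>i. c * t i) = \<phi> t"
  shows "(\<integral>\<^sup>+t. ennreal (Kc a bz * Qf a t * exp (- Lf bz t)) * \<phi> t \<partial>PiM UNIV (\<lambda>_. lborel))
    = (\<integral>\<^sup>+t. ennreal (Kc a bx * Qf a t * exp (- Lf bx t)) *
          (ennreal ((Kc a bz / Kc a bx) * (Lf bx t / Lf bz t) powr (\<Sum>i\<in>UNIV. a i)) * \<phi> t) \<partial>PiM UNIV (\<lambda>_. lborel))"
proof -
  define A where "A = (\<Sum>i\<in>UNIV. a i)"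
  have A: "A > 0" unfolding A_def using a by (intro sum_pos) auto
  define F where "F t = \<phi> t * ennreal (Qf a t * Lf bx t powr 0 * Lf bz t powr (- A))" for t
  have Kx: "0 < Kc a bx" and Ky: "0 < Kc a bz" using Kc_pos a bx bz by auto
  have h1: "ennreal (Kc a bz * Qf a t * exp (- Lf bz t)) * \<phi> t = ennreal (Kc a bz) * (F t * gA A (Lf bz t))" for t
  proof (cases "Qf a t = 0")
    case True then show ?thesis by (simp add: F_def)
  next
    case False
    then have "0 < t i" for i using Qf_nz by blast
    then have Lx: "0 < Lf bx t" and Ly: "0 < Lf bz t" using Lf_pos bx bz by blast+
    have e: "Kc a bz * Qf a t * exp (- Lf bz t) = Kc a bz * (Qf a t * Lf bx t powr 0 * Lf bz t powr (- A)) * (Lf bz t powr A * exp (- Lf bz t))"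
    proof -
      have u: "Lf bx t powr 0 = 1" using Lx by simp
      have pw: "Lf bz t powr (- A) * Lf bz t powr A = 1" using Ly by (simp add: powr_add[symmetric])
      have "Kc a bz * (Qf a t * Lf bx t powr 0 * Lf bz t powr (- A)) * (Lf bz t powr A * exp (- Lf bz t))
         = Kc a bz * Qf a t * exp (- Lf bz t) * (Lf bz t powr (- A) * Lf bz t powr A)"
        by (simp only: u mult_ac mult_1_left mult_1_right)
      then show ?thesis using pw by simp
    qed
    show ?thesis unfolding e F_def gA_def using Ky Qf_nonneg[of a t]
      by (intro ennr3) auto
  qed
  have h2: "ennreal (Kc a bx * Qf a t * exp (- Lf bx t)) *
          (ennreal ((Kc a bz / Kc a bx) * (Lf bx t / Lf bz t) powr A) * \<phi> t) = ennreal (Kc a bz) * (F t * gA A (Lf bx t))" for t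
  proof (cases "Qf a t = 0")
    case True then show ?thesis by (simp add: F_def)
  next
    case False
    then have "0 < t i" for i using Qf_nz by blast
    then have Lx: "0 < Lf bx t" and Ly: "0 < Lf bz t" using Lf_pos bx bz by blast+
    have e: "Kc a bx * Qf a t * exp (- Lf bx t) * ((Kc a bz / Kc a bx) * (Lf bx t / Lf bz t) powr A) =
       Kc a bz * (Qf a t * Lf bx t powr 0 * Lf bz t powr (- A)) * (Lf bx t powr A * exp (- Lf bx t))"
    proof -
      have u: "Lf bx t powr 0 = 1" using Lx by simp
      have d: "(Lf bx t / Lf bz t) powr A = Lf bx t powr A * Lf bz t powr (- A)"
        using Lx Ly by (subst powr_divide) (auto simp: powr_minus divide_inverse)
      have k: "Kc a bx * (Kc a bz / Kc a bx) = Kc a bz" using Kx by simp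
      have "Kc a bx * Qf a t * exp (- Lf bx t) * ((Kc a bz / Kc a bx) * (Lf bx t / Lf bz t) powr A)
          = (Kc a bx * (Kc a bz / Kc a bx)) * (Qf a t * Lf bz t powr (- A)) * (Lf bx t powr A * exp (- Lf bx t))"
        unfolding d by (simp only: mult_ac)
      also have "\<dots> = Kc a bz * (Qf a t * Lf bx t powr 0 * Lf bz t powr (- A)) * (Lf bx t powr A * exp (- Lf bx t))"
        unfolding k u by simp
      finally show ?thesis .
    qed
    have "ennreal (Kc a bx * Qf a t * exp (- Lf bx t)) *
          (ennreal ((Kc a bz / Kc a bx) * (Lf bx t / Lf bz t) powr A) * \<phi> t)
        = ennreal (Kc a bx * Qf a t * exp (- Lf bx t) * ((Kc a bz / Kc a bx) * (Lf bx t / Lf bz t) powr A)) * \<phi> t"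
      using Kx Ky Qf_nonneg[of a t] by (simp add: ennreal_mult[symmetric] mult_ac)
    also have "\<dots> = ennreal (Kc a bz) * (F t * gA A (Lf bx t))"
      unfolding e F_def gA_def using Ky Qf_nonneg[of a t]
      by (intro ennr3) auto
    finally show ?thesis .
  qed
  have H: "(\<integral>\<^sup>+t. F t * gA A (Lf bz t) \<partial>PiM UNIV (\<lambda>_. lborel)) * (\<integral>\<^sup>+v. gA A (exp v) \<partial>lborel)
      = (\<integral>\<^sup>+t. F t * gA A (Lf bx t) \<partial>PiM UNIV (\<lambda>_. lborel)) * (\<integral>\<^sup>+v. gA A (exp v) \<partial>lborel)"
    unfolding F_def by (rule homG[OF bx bz _ bz bx]) (auto simp: A_def \<phi>h)
  have H': "(\<integral>\<^sup>+t. F t * gA A (Lf bz t) \<partial>PiM UNIV (\<lambda>_. lborel)) = (\<integral>\<^sup>+t. F t * gA A (Lf bx t) \<partial>PiM UNIV (\<lambda>_. lborel))"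
    by (rule cancel_right[OF H[unfolded m_gA[OF A]] Gamma_real_pos[OF A]])
  have FM[measurable]: "F \<in> borel_measurable (PiM UNIV (\<lambda>_. lborel))" unfolding F_def by measurable
  show ?thesis
    unfolding A_def[symmetric] h1 h2
    by (simp add: nn_integral_cmult H')
qed



lemma Qf_upd: "Qf (a(j := a j + 1)) t = Qf a t * t j"
proof -
  have "Qf (a(j := a j + 1)) t = (\<Prod>i\<in>UNIV. (if 0 < t i then t i powr (a i - 1) else 0) * (if i = j then t j else 1))"
    unfolding Qf_def
  proof (intro prod.cong refl)
    fix i show "(if 0 < t i then t i powr ((a(j := a j + 1)) i - 1) else 0) =
      (if 0 < t i then t i powr (a i - 1) else 0) * (if i = j then t j else 1)"
      by (cases "i = j") (auto simp: powr_diff)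
  qed
  also have "\<dots> = Qf a t * t j" unfolding Qf_def by (simp add: prod.distrib)
  finally show ?thesis .
qed

lemma Gamma_plus1_real: "(z::real) > 0 \<Longrightarrow> Gamma (z + 1) = z * Gamma z"
  by (rule Gamma_plus1) (auto elim!: nonpos_Ints_cases)

lemma Kc_upd:
  assumes a: "\<And>i. 0 < a i" and b: "\<And>i. 0 < b i"
  shows "Kc (a(j := a j + 1)) b = Kc a b * (b j / a j)"
proof -
  have "Kc (a(j := a j + 1)) b = (\<Prod>i\<in>UNIV. (b i powr a i / Gamma (a i)) * (if i = j then b j / a j else 1))"
    unfolding Kc_def
  proof (intro prod.cong refl)
    fix i show "b i powr (a(j := a j + 1)) i / Gamma ((a(j := a j + 1)) i) =
      (b i powr a i / Gamma (a i)) * (if i = j then b j / a j else 1)"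
      using a[of j] b[of j] by (cases "i = j") (auto simp: powr_add Gamma_plus1_real)
  qed
  also have "\<dots> = Kc a b * (\<Prod>i\<in>UNIV. if i = j then b j / a j else 1)" unfolding Kc_def by (rule prod.distrib)
  also have "(\<Prod>i\<in>UNIV. if i = j then b j / a j else 1) = b j / a j" by simp
  finally show ?thesis .
qed

lemma int_Qe:
  fixes a b :: "'n::finite \<Rightarrow> real"
  assumes a: "\<And>i. 0 < a i" and b: "\<And>i. 0 < b i"
  shows "(\<integral>\<^sup>+t. ennreal (Qf a t * exp (- Lf b t)) \<partial>PiM UNIV (\<lambda>_. lborel)) = ennreal (1 / Kc a b)"
proof -
  have K: "0 < Kc a b" using Kc_pos a b by blast
  have "1 = (\<integral>\<^sup>+t. ennreal (Kc a b * (Qf a t * exp (- Lf b t))) \<partial>PiM UNIV (\<lambda>_. lborel))"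
    using int_prod_gd[OF a b] by (simp add: gd_prod[OF a b] mult.assoc)
  also have "\<dots> = ennreal (Kc a b) * (\<integral>\<^sup>+t. ennreal (Qf a t * exp (- Lf b t)) \<partial>PiM UNIV (\<lambda>_. lborel))"
    using K by (subst nn_integral_cmult[symmetric]) (auto simp: ennreal_mult Qf_nonneg)
  finally have e: "ennreal (Kc a b) * (\<integral>\<^sup>+t. ennreal (Qf a t * exp (- Lf b t)) \<partial>PiM UNIV (\<lambda>_. lborel)) = 1" ..
  have "ennreal (1 / Kc a b) * ennreal (Kc a b) = 1"
    using K by (simp add: ennreal_mult[symmetric])
  then have "(\<integral>\<^sup>+t. ennreal (Qf a t * exp (- Lf b t)) \<partial>PiM UNIV (\<lambda>_. lborel))
     = ennreal (1 / Kc a b) * (ennreal (Kc a b) * (\<integral>\<^sup>+t. ennreal (Qf a t * exp (- Lf b t)) \<partial>PiM UNIV (\<lambda>_. lborel)))"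
    by (simp add: mult.assoc[symmetric])
  also have "\<dots> = ennreal (1 / Kc a b)" using e by simp
  finally show ?thesis .
qed

lemma int_QLe:
  fixes a bx bz :: "'n::finite \<Rightarrow> real"
  assumes a: "\<And>i. 0 < a i" and bx: "\<And>i. 0 < bx i" and bz: "\<And>i. 0 < bz i"
  shows "(\<integral>\<^sup>+t. ennreal (Qf a t * Lf bx t * exp (- Lf bz t)) \<partial>PiM UNIV (\<lambda>_. lborel))
     = ennreal ((\<Sum>j\<in>UNIV. bx j * a j / bz j) / Kc a bz)"
proof -
  have K: "0 < Kc a bz" using Kc_pos a bz by blast
  have a': "0 < (a(j := a j + 1)) i" for i j using a[of i] a[of j] by auto
  have pw: "ennreal (Qf a t * Lf bx t * exp (- Lf bz t)) =
      (\<Sum>j\<in>UNIV. ennreal (bx j) * ennreal (Qf (a(j := a j + 1)) t * exp (- Lf bz t)))" for t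
  proof (cases "\<forall>i. 0 < t i")
    case True
    have "Qf a t * Lf bx t * exp (- Lf bz t) = (\<Sum>j\<in>UNIV. bx j * (Qf (a(j := a j + 1)) t * exp (- Lf bz t)))"
      by (simp add: Qf_upd Lf_def sum_distrib_left sum_distrib_right mult_ac)
    moreover have "0 \<le> bx j * (Qf (a(j := a j + 1)) t * exp (- Lf bz t))" for j
      using bx[of j] by (simp add: Qf_nonneg)
    ultimately show ?thesis
      using bx by (simp add: ennreal_mult[symmetric] Qf_nonneg less_imp_le)
  next
    case False
    then obtain i where "\<not> 0 < t i" by auto
    then have "Qf b' t = 0" for b' using Qf_nz by blast
    then show ?thesis by simp
  qed
  have "(\<integral>\<^sup>+t. ennreal (Qf a t * Lf bx t * exp (- Lf bz t)) \<partial>PiM UNIV (\<lambda>_. lborel))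
     = (\<Sum>j\<in>UNIV. ennreal (bx j) * (\<integral>\<^sup>+t. ennreal (Qf (a(j := a j + 1)) t * exp (- Lf bz t)) \<partial>PiM UNIV (\<lambda>_. lborel)))"
    unfolding pw by (subst nn_integral_sum) (auto simp: nn_integral_cmult)
  also have "\<dots> = (\<Sum>j\<in>UNIV. ennreal (bx j * a j / bz j / Kc a bz))"
  proof (intro sum.cong refl)
    fix j
    have "ennreal (bx j) * ennreal (1 / Kc (a(j := a j + 1)) bz) = ennreal (bx j * a j / bz j / Kc a bz)"
    proof -
      have kk: "Kc (a(j := a j + 1)) bz = Kc a bz * (bz j / a j)" by (rule Kc_upd[OF a bz])
      have r: "bx j * (1 / (Kc a bz * (bz j / a j))) = bx j * a j / bz j / Kc a bz"
        using bx[of j] a[of j] bz[of j] K by (simp add: field_simps)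
      have "ennreal (bx j) * ennreal (1 / Kc (a(j := a j + 1)) bz) = ennreal (bx j * (1 / (Kc a bz * (bz j / a j))))"
        unfolding kk using bx[of j] a[of j] bz[of j] K by (subst ennreal_mult) auto
      then show ?thesis unfolding r .
    qed
    then show "ennreal (bx j) * (\<integral>\<^sup>+t. ennreal (Qf (a(j := a j + 1)) t * exp (- Lf bz t)) \<partial>PiM UNIV (\<lambda>_. lborel))
      = ennreal (bx j * a j / bz j / Kc a bz)"
    proof -
      have iq: "(\<integral>\<^sup>+t. ennreal (Qf (a(j := a j + 1)) t * exp (- Lf bz t)) \<partial>PiM UNIV (\<lambda>_. lborel))
          = ennreal (1 / Kc (a(j := a j + 1)) bz)"
        by (rule int_Qe) (auto simp: bz add_pos_pos a)
      show ?thesis unfolding iq by fact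
    qed
  qed
  also have "\<dots> = ennreal ((\<Sum>j\<in>UNIV. bx j * a j / bz j) / Kc a bz)"
    using a bx bz K by (subst sum_ennreal) (auto simp: sum_divide_distrib intro!: divide_nonneg_pos mult_nonneg_nonneg less_imp_le)
  finally show ?thesis .
qed



lemma EXP:
  fixes a bx bz :: "'n::finite \<Rightarrow> real"
  assumes a: "\<And>i. 0 < a i" and bx: "\<And>i. 0 < bx i" and bz: "\<And>i. 0 < bz i"
  shows "(\<integral>\<^sup>+t. ennreal (Kc a bx * Qf a t * exp (- Lf bx t)) * ennreal ((Lf bx t / Lf bz t) powr ((\<Sum>i\<in>UNIV. a i) + 1))
            \<partial>PiM UNIV (\<lambda>_. lborel))
       = ennreal (Kc a bx * ((\<Sum>j\<in>UNIV. bx j * a j / bz j) / Kc a bz) / (\<Sum>i\<in>UNIV. a i))"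
proof -
  define A where "A = (\<Sum>i\<in>UNIV. a i)"
  have A: "A > 0" unfolding A_def using a by (intro sum_pos) auto
  define S where "S = (\<Sum>j\<in>UNIV. bx j * a j / bz j)"
  have Sp: "0 < S" unfolding S_def using a bx bz by (intro sum_pos divide_pos_pos mult_pos_pos) auto
  have Kx: "0 < Kc a bx" and Kz: "0 < Kc a bz" using Kc_pos a bx bz by auto
  define F where "F t = (\<lambda>_. 1::ennreal) t * ennreal (Qf a t * Lf bx t powr 1 * Lf bz t powr (- (A + 1)))" for t
  have FM[measurable]: "F \<in> borel_measurable (PiM UNIV (\<lambda>_. lborel))" unfolding F_def by measurable
  have h1: "ennreal (Kc a bx * Qf a t * exp (- Lf bx t)) * ennreal ((Lf bx t / Lf bz t) powr (A + 1))
      = ennreal (Kc a bx) * (F t * gA A (Lf bx t))" for t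
  proof (cases "Qf a t = 0")
    case True then show ?thesis by (simp add: F_def)
  next
    case False
    then have "0 < t i" for i using Qf_nz by blast
    then have Lx: "0 < Lf bx t" and Lz: "0 < Lf bz t" using Lf_pos bx bz by blast+
    have d: "(Lf bx t / Lf bz t) powr (A + 1) = Lf bx t powr 1 * Lf bx t powr A * Lf bz t powr (- (A + 1))"
    proof -
      have "(Lf bx t / Lf bz t) powr (A + 1) = Lf bx t powr (A + 1) * Lf bz t powr (- (A + 1))"
      proof -
        have m: "Lf bz t powr (- (A + 1)) = inverse (Lf bz t powr (A + 1))" by (rule powr_minus)
        have "(Lf bx t / Lf bz t) powr (A + 1) = Lf bx t powr (A + 1) / Lf bz t powr (A + 1)"
          using Lx Lz by (intro powr_divide)
        then show ?thesis unfolding m by (simp add: divide_inverse)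
      qed
      moreover have "Lf bx t powr (A + 1) = Lf bx t powr 1 * Lf bx t powr A"
        by (simp only: powr_add[symmetric] add.commute)
      ultimately show ?thesis by simp
    qed
    have e: "Kc a bx * Qf a t * exp (- Lf bx t) * (Lf bx t / Lf bz t) powr (A + 1) =
       Kc a bx * (Qf a t * Lf bx t powr 1 * Lf bz t powr (- (A + 1))) * (Lf bx t powr A * exp (- Lf bx t))"
      unfolding d by (simp only: mult_ac)
    have "ennreal (Kc a bx * Qf a t * exp (- Lf bx t)) * ennreal ((Lf bx t / Lf bz t) powr (A + 1))
       = ennreal (Kc a bx * Qf a t * exp (- Lf bx t) * (Lf bx t / Lf bz t) powr (A + 1))"
      using Kx Qf_nonneg[of a t] by (subst ennreal_mult) auto
    also have "\<dots> = ennreal (Kc a bx) * (F t * gA A (Lf bx t))"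
      unfolding e F_def gA_def using Kx Qf_nonneg[of a t]
      by (subst ennr3[where f=1, simplified]) auto
    finally show ?thesis .
  qed
  have h3: "F t * gA (A + 1) (Lf bz t) = ennreal (Qf a t * Lf bx t * exp (- Lf bz t))" for t
  proof (cases "Qf a t = 0")
    case True then show ?thesis by (simp add: F_def)
  next
    case False
    then have "0 < t i" for i using Qf_nz by blast
    then have Lx: "0 < Lf bx t" and Lz: "0 < Lf bz t" using Lf_pos bx bz by blast+
    have pw: "Lf bz t powr (- (A + 1)) * Lf bz t powr (A + 1) = 1" using Lz by (simp add: powr_add[symmetric])
    have e: "Qf a t * Lf bx t powr 1 * Lf bz t powr (- (A + 1)) * (Lf bz t powr (A + 1) * exp (- Lf bz t))
        = Qf a t * Lf bx t * exp (- Lf bz t)"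
    proof -
      have "Qf a t * Lf bx t powr 1 * Lf bz t powr (- (A + 1)) * (Lf bz t powr (A + 1) * exp (- Lf bz t))
        = Qf a t * Lf bx t powr 1 * exp (- Lf bz t) * (Lf bz t powr (- (A + 1)) * Lf bz t powr (A + 1))"
        by (simp only: mult_ac)
      then show ?thesis using pw Lx by simp
    qed
    show ?thesis unfolding F_def gA_def e[symmetric] using Qf_nonneg[of a t] Lx
      by (subst ennreal_mult) auto
  qed
  have H: "(\<integral>\<^sup>+t. F t * gA A (Lf bx t) \<partial>PiM UNIV (\<lambda>_. lborel)) * (\<integral>\<^sup>+v. gA (A + 1) (exp v) \<partial>lborel)
      = (\<integral>\<^sup>+t. F t * gA (A + 1) (Lf bz t) \<partial>PiM UNIV (\<lambda>_. lborel)) * (\<integral>\<^sup>+v. gA A (exp v) \<partial>lborel)"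
    unfolding F_def by (rule homG[OF bx bz _ bx bz]) (auto simp: A_def)
  have I3: "(\<integral>\<^sup>+t. F t * gA (A + 1) (Lf bz t) \<partial>PiM UNIV (\<lambda>_. lborel)) = ennreal (S / Kc a bz)"
    unfolding h3 S_def by (rule int_QLe[OF a bx bz])
  have GA: "Gamma (A + 1) = A * Gamma A" using Gamma_plus1_real[OF A] .
  have H2: "(\<integral>\<^sup>+t. F t * gA A (Lf bx t) \<partial>PiM UNIV (\<lambda>_. lborel)) * ennreal (A * Gamma A)
       = ennreal (S / Kc a bz / A) * ennreal (A * Gamma A)"
  proof -
    have "ennreal (S / Kc a bz) * ennreal (Gamma A) = ennreal (S / Kc a bz / A) * ennreal (A * Gamma A)"
    proof -
      have G: "0 < Gamma A" using Gamma_real_pos[OF A] .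
      have "ennreal (S / Kc a bz) * ennreal (Gamma A) = ennreal (S / Kc a bz * Gamma A)"
        using Sp Kz G by (subst ennreal_mult) auto
      also have "S / Kc a bz * Gamma A = S / Kc a bz / A * (A * Gamma A)" using A by simp
      also have "ennreal \<dots> = ennreal (S / Kc a bz / A) * ennreal (A * Gamma A)"
        using Sp Kz G A by (subst ennreal_mult) auto
      finally show ?thesis .
    qed
    then show ?thesis
      using H unfolding I3 m_gA[OF A] m_gA[OF add_pos_pos[OF A zero_less_one]] GA by simp
  qed
  have I1: "(\<integral>\<^sup>+t. F t * gA A (Lf bx t) \<partial>PiM UNIV (\<lambda>_. lborel)) = ennreal (S / Kc a bz / A)"
    by (rule cancel_right[OF H2]) (use A Gamma_real_pos[OF A] in simp)
  have "(\<integral>\<^sup>+t. ennreal (Kc a bx * Qf a t * exp (- Lf bx t)) * ennreal ((Lf bx t / Lf bz t) powr (A + 1))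
            \<partial>PiM UNIV (\<lambda>_. lborel)) = ennreal (Kc a bx) * ennreal (S / Kc a bz / A)"
    unfolding h1 by (simp add: nn_integral_cmult I1)
  also have "\<dots> = ennreal (Kc a bx * (S / Kc a bz) / A)"
    using Kx Kz Sp A by (subst ennreal_mult[symmetric]) auto
  finally show ?thesis unfolding A_def S_def .
qed



lemma Lf_meas2[measurable]: "Lf b \<in> borel_measurable (PiM UNIV (\<lambda>_::'n::finite. borel))"
  unfolding Lf_def by measurable

lemma cl_meas[measurable]: "closure_op \<in> measurable (PiM UNIV (\<lambda>_::'n::finite. lborel)) (PiM UNIV (\<lambda>_. borel))"
  unfolding closure_op_def by (rule measurable_PiM_single') (auto simp: space_PiM)

lemma cl_hom: "c > 0 \<Longrightarrow> closure_op (\<lambda>i. c * t i) = closure_op (t :: 'n::finite \<Rightarrow> real)"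
  unfolding closure_op_def by (auto simp: fun_eq_iff sum_distrib_left[symmetric])

lemma Lf_cl: "(\<Sum>j\<in>UNIV. t j) \<noteq> 0 \<Longrightarrow> Lf b (closure_op t) = Lf b t / (\<Sum>j\<in>UNIV. t j)"
  unfolding closure_op_def Lf_def by (simp add: sum_divide_distrib)

lemma ratio_cl:
  assumes "\<And>i. 0 < (t::'n::finite \<Rightarrow> real) i"
  shows "Lf b1 (closure_op t) / Lf b2 (closure_op t) = Lf b1 t / Lf b2 t"
proof -
  have "0 < (\<Sum>j\<in>UNIV. t j)" using assms by (intro sum_pos) auto
  then show ?thesis by (simp add: Lf_cl)
qed

lemma ln_Kc:
  assumes a: "\<And>i. 0 < a i" and b: "\<And>i. 0 < b i"
  shows "ln (Kc a b) = (\<Sum>i\<in>UNIV. a i * ln (b i) - ln (Gamma (a i)))"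
proof -
  have nz1: "b i \<noteq> 0" for i using b[of i] by auto
  have nz2: "Gamma (a i) \<noteq> 0" for i using Gamma_real_pos[of "a i"] a[of i] by (metis less_irrefl)
  note nz = nz1 nz2
  show ?thesis
    unfolding Kc_def using a b Gamma_real_pos[OF a]
    by (subst ln_prod) (auto simp: ln_div ln_powr nz)
qed

theorem mainTheorem5:
  fixes \<pi> x y :: "'n::finite \<Rightarrow> real" and \<sigma> :: real
  assumes "CARD('n) \<ge> 2"
    and "\<pi> \<in> open_simplex" and "\<sigma> > 0"
    and "x \<in> open_simplex" and "y \<in> open_simplex"
  shows "renyi_div (1 + \<sigma>) (mu_sd \<pi> y \<sigma>) (mu_sd \<pi> x \<sigma>) = ereal (Gamma_div \<pi> y x / \<sigma>)"
proof -
  have pp: "0 < \<pi> i" and px: "0 < x i" and py: "0 < y i" for i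
    using assms(2,4,5) by (auto simp: open_simplex_def)
  have s1: "(\<Sum>i\<in>UNIV. \<pi> i) = 1" using assms(2) by (auto simp: open_simplex_def)
  have sg: "\<sigma> > 0" by fact
  define \<alpha> where "\<alpha> = (\<lambda>i. \<pi> i / \<sigma>)"
  define bx where "bx = (\<lambda>i. \<pi> i / x i)"
  define bw where "bw = (\<lambda>i. \<pi> i / y i)"
  have ap: "\<And>i. 0 < \<alpha> i" and bxp: "\<And>i. 0 < bx i" and bwp: "\<And>i. 0 < bw i"
    unfolding \<alpha>_def bx_def bw_def using pp px py sg by auto
  define A where "A = (\<Sum>i\<in>UNIV. \<alpha> i)"
  have A: "A = 1 / \<sigma>" unfolding A_def \<alpha>_def by (simp add: sum_divide_distrib[symmetric] s1)
  have Apos: "A > 0" using A sg by simp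
  define Kx where "Kx = Kc \<alpha> bx"
  define Ky where "Ky = Kc \<alpha> bw"
  have Kx: "0 < Kx" and Ky: "0 < Ky" unfolding Kx_def Ky_def using Kc_pos ap bxp bwp by auto
  let ?Ln = "PiM UNIV (\<lambda>_::'n. lborel :: real measure)"
  let ?M = "PiM UNIV (\<lambda>_::'n. borel :: real measure)"
  define Dx where "Dx t = ennreal (Kx * Qf \<alpha> t * exp (- Lf bx t))" for t
  define Dy where "Dy t = ennreal (Ky * Qf \<alpha> t * exp (- Lf bw t))" for t
  have [measurable]: "Dx \<in> borel_measurable ?Ln" "Dy \<in> borel_measurable ?Ln"
    unfolding Dx_def Dy_def by measurable
  have Px: "PiM UNIV (\<lambda>i. gamma_distr (\<alpha> i) (bx i)) = density ?Ln Dx"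
    unfolding PiM_gamma[OF ap bxp] Dx_def Kx_def gd_prod[OF ap bxp] ..
  have Py: "PiM UNIV (\<lambda>i. gamma_distr (\<alpha> i) (bw i)) = density ?Ln Dy"
    unfolding PiM_gamma[OF ap bwp] Dy_def Ky_def gd_prod[OF ap bwp] ..
  have mux: "mu_sd \<pi> x \<sigma> = distr (density ?Ln Dx) ?M closure_op"
    unfolding mu_sd_def scaled_dirichlet_def Px[symmetric] \<alpha>_def bx_def ..
  have muy: "mu_sd \<pi> y \<sigma> = distr (density ?Ln Dy) ?M closure_op"
    unfolding mu_sd_def scaled_dirichlet_def Py[symmetric] \<alpha>_def bw_def ..
  define R where "R z = (Ky / Kx) * (Lf bx z / Lf bw z) powr A" for z
  have R0: "0 \<le> R z" for z unfolding R_def using Kx Ky by simp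
  have Rm[measurable]: "R \<in> borel_measurable ?M" unfolding R_def by measurable
  define h where "h z = ennreal (R z)" for z
  have hm[measurable]: "h \<in> borel_measurable ?M" unfolding h_def by measurable
  have Rcl: "Qf \<alpha> t \<noteq> 0 \<Longrightarrow> R (closure_op t) = (Ky / Kx) * (Lf bx t / Lf bw t) powr A" for t
  proof -
    assume "Qf \<alpha> t \<noteq> 0"
    then have "0 < t i" for i using Qf_nz by blast
    then show ?thesis unfolding R_def by (simp add: ratio_cl)
  qed
  have dens: "mu_sd \<pi> y \<sigma> = density (mu_sd \<pi> x \<sigma>) h"
  proof (rule measure_eqI)
    show "sets (mu_sd \<pi> y \<sigma>) = sets (density (mu_sd \<pi> x \<sigma>) h)" unfolding mux muy by simp
    fix B assume "B \<in> sets (mu_sd \<pi> y \<sigma>)"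
    then have B[measurable]: "B \<in> sets ?M" unfolding muy by simp
    have phm[measurable]: "(\<lambda>t. indicator B (closure_op t) :: ennreal) \<in> borel_measurable ?Ln" by measurable
    have "emeasure (mu_sd \<pi> y \<sigma>) B = (\<integral>\<^sup>+t. Dy t * indicator B (closure_op t) \<partial>?Ln)"
      unfolding muy by (subst emeasure_distr) (auto simp: emeasure_density intro!: nn_integral_cong split: split_indicator)
    also have "\<dots> = (\<integral>\<^sup>+t. Dx t * (ennreal ((Ky / Kx) * (Lf bx t / Lf bw t) powr A) * indicator B (closure_op t)) \<partial>?Ln)"
      unfolding Dx_def Dy_def Kx_def Ky_def A_def
      by (rule EXCH[OF ap bxp bwp phm]) (simp add: cl_hom)
    also have "\<dots> = (\<integral>\<^sup>+t. Dx t * (h (closure_op t) * indicator B (closure_op t)) \<partial>?Ln)"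
    proof (rule nn_integral_cong)
      fix t show "Dx t * (ennreal ((Ky / Kx) * (Lf bx t / Lf bw t) powr A) * indicator B (closure_op t)) =
          Dx t * (h (closure_op t) * indicator B (closure_op t))"
        by (cases "Qf \<alpha> t = 0") (auto simp: Dx_def h_def Rcl)
    qed
    also have "\<dots> = emeasure (density (mu_sd \<pi> x \<sigma>) h) B"
      unfolding mux
      by (subst emeasure_density) (auto simp: nn_integral_distr nn_integral_density)
    finally show "emeasure (mu_sd \<pi> y \<sigma>) B = emeasure (density (mu_sd \<pi> x \<sigma>) h) B" .
  qed
  have prob_x: "prob_space (mu_sd \<pi> x \<sigma>)"
  proof -
    have "prob_space (density ?Ln Dx)" unfolding Px[symmetric] by (intro prob_space_PiM prob_gamma ap bxp)
    then show ?thesis unfolding mux by (rule prob_space.prob_space_distr) simp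
  qed
  interpret X: prob_space "mu_sd \<pi> x \<sigma>" by (rule prob_x)
  have hm2: "h \<in> borel_measurable (mu_sd \<pi> x \<sigma>)" unfolding mux by simp
  have AE: "AE z in mu_sd \<pi> x \<sigma>. h z = RN_deriv (mu_sd \<pi> x \<sigma>) (mu_sd \<pi> y \<sigma>) z"
    by (rule X.RN_deriv_unique[OF hm2 dens[symmetric]])
  have ac: "absolutely_continuous (mu_sd \<pi> x \<sigma>) (mu_sd \<pi> y \<sigma>)"
    unfolding dens by (rule absolutely_continuousI_density[OF hm2])
  define T where "T = (\<Sum>j\<in>UNIV. \<pi> j * (y j / x j))"
  have Tp: "0 < T" unfolding T_def using pp px py by (intro sum_pos) auto
  define V where "V = (Ky / Kx) powr \<sigma> * T"
  have I: "(\<integral>\<^sup>+ \<omega>. ennreal ((enn2real (RN_deriv (mu_sd \<pi> x \<sigma>) (mu_sd \<pi> y \<sigma>) \<omega>)) powr (1 + \<sigma>)) \<partial>(mu_sd \<pi> x \<sigma>))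
      = ennreal V"
  proof -
    have "(\<integral>\<^sup>+ \<omega>. ennreal ((enn2real (RN_deriv (mu_sd \<pi> x \<sigma>) (mu_sd \<pi> y \<sigma>) \<omega>)) powr (1 + \<sigma>)) \<partial>(mu_sd \<pi> x \<sigma>))
        = (\<integral>\<^sup>+ z. ennreal (R z powr (1 + \<sigma>)) \<partial>(mu_sd \<pi> x \<sigma>))"
    proof -
      from AE have "AE z in mu_sd \<pi> x \<sigma>. ennreal ((enn2real (RN_deriv (mu_sd \<pi> x \<sigma>) (mu_sd \<pi> y \<sigma>) z)) powr (1 + \<sigma>))
         = ennreal (R z powr (1 + \<sigma>))"
        by eventually_elim (metis R0 enn2real_ennreal h_def)
      then show ?thesis by (rule nn_integral_cong_AE)
    qed
    also have "\<dots> = (\<integral>\<^sup>+ t. Dx t * ennreal (R (closure_op t) powr (1 + \<sigma>)) \<partial>?Ln)"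
      unfolding mux by (auto simp: nn_integral_distr nn_integral_density)
    also have "\<dots> = (\<integral>\<^sup>+ t. ennreal ((Ky / Kx) powr (1 + \<sigma>)) *
          (ennreal (Kx * Qf \<alpha> t * exp (- Lf bx t)) * ennreal ((Lf bx t / Lf bw t) powr (A + 1))) \<partial>?Ln)"
    proof (rule nn_integral_cong)
      fix t :: "'n \<Rightarrow> real"
      show "Dx t * ennreal (R (closure_op t) powr (1 + \<sigma>)) = ennreal ((Ky / Kx) powr (1 + \<sigma>)) *
          (ennreal (Kx * Qf \<alpha> t * exp (- Lf bx t)) * ennreal ((Lf bx t / Lf bw t) powr (A + 1)))"
      proof (cases "Qf \<alpha> t = 0")
        case True then show ?thesis by (simp add: Dx_def)
      next
        case False
        have "R (closure_op t) powr (1 + \<sigma>) = (Ky / Kx) powr (1 + \<sigma>) * ((Lf bx t / Lf bw t) powr A) powr (1 + \<sigma>)"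
          unfolding Rcl[OF False] using Kx Ky by (subst powr_mult) auto
        also have "((Lf bx t / Lf bw t) powr A) powr (1 + \<sigma>) = (Lf bx t / Lf bw t) powr (A + 1)"
          using A sg by (simp add: powr_powr field_simps)
        finally have e: "R (closure_op t) powr (1 + \<sigma>) = (Ky / Kx) powr (1 + \<sigma>) * (Lf bx t / Lf bw t) powr (A + 1)" .
        show ?thesis unfolding Dx_def e using Kx Qf_nonneg[of \<alpha> t]
          by (simp add: ennreal_mult mult_ac)
      qed
    qed
    also have "\<dots> = ennreal ((Ky / Kx) powr (1 + \<sigma>)) * ennreal (Kx * ((\<Sum>j\<in>UNIV. bx j * \<alpha> j / bw j) / Ky) / A)"
      unfolding A_def Kx_def Ky_def
      by (subst nn_integral_cmult) (auto simp: EXP[OF ap bxp bwp])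
    also have "(\<Sum>j\<in>UNIV. bx j * \<alpha> j / bw j) = T / \<sigma>"
      unfolding T_def bx_def bw_def \<alpha>_def sum_divide_distrib
      using pp px py by (intro sum.cong refl) (simp add: field_simps)
    also have "ennreal ((Ky / Kx) powr (1 + \<sigma>)) * ennreal (Kx * (T / \<sigma> / Ky) / A) = ennreal V"
    proof -
      have "(Ky / Kx) powr (1 + \<sigma>) * (Kx * (T / \<sigma> / Ky) / A) = V"
        unfolding V_def A using Kx Ky sg by (simp add: powr_add field_simps)
      then show ?thesis using Kx Ky sg Tp Apos by (subst ennreal_mult[symmetric]) auto
    qed
    finally show ?thesis .
  qed
  have Vp: "0 < V" unfolding V_def using Kx Ky Tp by simp
  have lnV: "ln V = Gamma_div \<pi> y x"
  proof -
    have "ln V = \<sigma> * (ln Ky - ln Kx) + ln T"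
      unfolding V_def using Kx Ky Tp by (simp add: ln_mult ln_powr ln_div)
    also have "\<sigma> * (ln Ky - ln Kx) = \<sigma> * (\<Sum>i\<in>UNIV. \<alpha> i * ln (bw i) - \<alpha> i * ln (bx i))"
      unfolding Ky_def Kx_def ln_Kc[OF ap bwp] ln_Kc[OF ap bxp] by (simp add: sum_subtractf[symmetric])
    also have "\<dots> = - (\<Sum>i\<in>UNIV. \<pi> i * ln (y i / x i))"
      unfolding sum_distrib_left sum_negf[symmetric] \<alpha>_def bw_def bx_def
    proof (intro sum.cong refl)
      fix i
      have l1: "ln (\<pi> i / y i) = ln (\<pi> i) - ln (y i)" using pp[of i] py[of i] by (simp add: ln_div)
      have l2: "ln (\<pi> i / x i) = ln (\<pi> i) - ln (x i)" using pp[of i] px[of i] by (simp add: ln_div)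
      have l3: "ln (y i / x i) = ln (y i) - ln (x i)" using py[of i] px[of i] by (simp add: ln_div)
      have "\<sigma> * (\<pi> i / \<sigma> * ln (\<pi> i / y i) - \<pi> i / \<sigma> * ln (\<pi> i / x i)) = \<pi> i * (ln (\<pi> i / y i) - ln (\<pi> i / x i))"
        using sg by (simp add: field_simps)
      then show "\<sigma> * (\<pi> i / \<sigma> * ln (\<pi> i / y i) - \<pi> i / \<sigma> * ln (\<pi> i / x i)) = - (\<pi> i * ln (y i / x i))"
        unfolding l1 l2 l3 by (simp add: algebra_simps)
    qed
    finally show ?thesis unfolding Gamma_div_def T_def by simp
  qed
  show ?thesis
    unfolding renyi_div_def Let_def I using ac lnV Vp by simp
qed

end
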